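(* Let $\mathbf{c},\mathbf{d}$ be (possibly empty) real parameter vectors such that the kernel $K(\mu,n)=\dfrac{(\mathbf{c}+\mu)_n}{(\mathbf{d}+\mu)_n}$ is sign regular of order $3$ on $(0,\infty)\times\mathbb{N}_0$. Let $\mathbf{a}_1,\mathbf{a}_2,\mathbf{b}_1,\mathbf{b}_2$ be positive parameter vectors, let $x>0$, and assume the hypergeometric series below converge with non-vanishing denominator. Let $\mathbf{a}=(\mathbf{a}_1,\mathbf{a}_2)=(a_1,\dots,a_m)$ and $\mathbf{b}=(\mathbf{b}_1,\mathbf{b}_2)=(b_1,\dots,b_n)$ satisfy $m\le n$ and $$\frac{e_n(\mathbf{b})}{e_m(\mathbf{a})}\le\frac{e_{n-1}(\mathbf{b})}{e_{m-1}(\mathbf{a})}\le\dots\le\frac{e_{n-m+1}(\mathbf{b})}{e_1(\mathbf{a})}\le e_{n-m}(\mathbf{b}).$$ Then the function $$F(\mu)=\frac{{}_pF_q\!\left(\begin{matrix}\mathbf{c}+\mu,\ \mathbf{a}_1\\ \mathbf{d}+\mu,\ \mathbf{b}_1\end{matrix}\,\Big|\,x\right)}{{}_sF_t\!\left(\begin{matrix}\mathbf{c}+\mu,\ \mathbf{b}_2\\ \mathbf{d}+\mu,\ \mathbf{a}_2\end{matrix}\,\Big|\,x\right)}$$ is unimodal on $(0,\infty)$.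
   Context: For a vector $\mathbf{c}=(c_1,\dots,c_r)$, $(\mathbf{c}+\mu)_k=\prod_{i=1}^r(c_i+\mu)_k$ (equal to $1$ if $\mathbf{c}$ is empty), where $(y)_k=y(y+1)\cdots(y+k-1)$ is the Pochhammer symbol; similarly $(\mathbf{a})_k=\prod_i(a_i)_k$. ${}_pF_q$ denotes the generalized hypergeometric series $\sum_{k\ge0}\frac{(\text{top parameters})_k}{(\text{bottom parameters})_k}\frac{x^k}{k!}$, with $p$, $q$, $s$, $t$ the total numbers of top/bottom parameters. $e_j(\mathbf{a})$ is the $j$-th elementary symmetric polynomial of the entries of $\mathbf{a}$ ($e_0=1$). A kernel $K:X\times Y\to\mathbb{R}$ is sign regular of order $3$ if there are signs $\varepsilon_1,\varepsilon_2,\varepsilon_3\in\{\pm1\}$ with $\varepsilon_m\det(K(x_i,y_j))_{i,j=1}^m\ge0$ for $m=1,2,3$ and all $x_1<\dots<x_m$, $y_1<\dots<y_m$. A function is unimodal if it changes its direction of monotonicity at most once. *)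

theory Defs
  imports Complex_Main "Jordan_Normal_Form.Determinant"
begin

definition poch_vec :: "real list \<Rightarrow> nat \<Rightarrow> real" where
  "poch_vec cs k = prod_list (map (\<lambda>c. pochhammer c k) cs)"

definition shift_vec :: "real list \<Rightarrow> real \<Rightarrow> real list" where
  "shift_vec cs \<mu> = map (\<lambda>c. c + \<mu>) cs"

definition hyp_term :: "real list \<Rightarrow> real list \<Rightarrow> real \<Rightarrow> nat \<Rightarrow> real" where
  "hyp_term tops bots x k = poch_vec tops k / poch_vec bots k * x ^ k / fact k"

definition hypF :: "real list \<Rightarrow> real list \<Rightarrow> real \<Rightarrow> real" where
  "hypF tops bots x = (\<Sum>k. hyp_term tops bots x k)"

definition esym :: "nat \<Rightarrow> real list \<Rightarrow> real" where
  "esym j xs = (\<Sum>S\<in>{S. S \<subseteq> {..<length xs} \<and> card S = j}. \<Prod>i\<in>S. xs ! i)"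

definition sign_regular3 :: "'a::linorder set \<Rightarrow> 'b::linorder set \<Rightarrow> ('a \<Rightarrow> 'b \<Rightarrow> real) \<Rightarrow> bool" where
  "sign_regular3 X Y K \<longleftrightarrow>
    (\<exists>\<epsilon>::nat \<Rightarrow> real. \<forall>m\<in>{1,2,3}. (\<epsilon> m = 1 \<or> \<epsilon> m = -1) \<and>
       (\<forall>xs ys. (\<forall>i<m. xs i \<in> X \<and> ys i \<in> Y) \<longrightarrow>
          (\<forall>i j. i < j \<longrightarrow> j < m \<longrightarrow> xs i < xs j \<and> ys i < ys j) \<longrightarrow>
          \<epsilon> m * det (mat m m (\<lambda>(i,j). K (xs i) (ys j))) \<ge> 0))"

definition unimodal_on :: "real set \<Rightarrow> (real \<Rightarrow> real) \<Rightarrow> bool" where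
  "unimodal_on S f \<longleftrightarrow> (\<exists>t.
     (monotone_on {y\<in>S. y \<le> t} (\<le>) (\<le>) f \<and> monotone_on {y\<in>S. t \<le> y} (\<le>) (\<ge>) f) \<or>
     (monotone_on {y\<in>S. y \<le> t} (\<le>) (\<ge>) f \<and> monotone_on {y\<in>S. t \<le> y} (\<le>) (\<le>) f))"

end

theory Submission
  imports Defs "HOL-Analysis.Uniform_Limit"
begin


definition D3 :: "(nat\<Rightarrow>real) \<Rightarrow> (nat\<Rightarrow>real) \<Rightarrow> (nat\<Rightarrow>real) \<Rightarrow> real" where
 "D3 u v w = u 0 * (v 1 * w 2 - v 2 * w 1) - u 1 * (v 0 * w 2 - v 2 * w 0) + u 2 * (v 0 * w 1 - v 1 * w 0)"
definition D2 :: "(nat\<Rightarrow>real) \<Rightarrow> (nat\<Rightarrow>real) \<Rightarrow> real" where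
 "D2 u v = u 0 * v 1 - u 1 * v 0"

lemma D3_sums1: assumes "\<And>i. (\<lambda>k. f k i) sums u i" shows "(\<lambda>k. D3 (f k) v w) sums D3 u v w"
  unfolding D3_def by (intro sums_add sums_diff sums_mult2 assms)
lemma D3_sums2: assumes "\<And>i. (\<lambda>k. f k i) sums v i" shows "(\<lambda>k. D3 u (f k) w) sums D3 u v w"
  unfolding D3_def by (intro sums_add sums_diff sums_mult sums_mult2 assms)
lemma D3_sums3: assumes "\<And>i. (\<lambda>k. f k i) sums w i" shows "(\<lambda>k. D3 u v (f k)) sums D3 u v w"
  unfolding D3_def by (intro sums_add sums_diff sums_mult sums_mult2 assms)
lemma D2_sums1: assumes "\<And>i. (\<lambda>k. f k i) sums u i" shows "(\<lambda>k. D2 (f k) v) sums D2 u v"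
  unfolding D2_def by (intro sums_add sums_diff sums_mult2 assms)
lemma D2_sums2: assumes "\<And>i. (\<lambda>k. f k i) sums v i" shows "(\<lambda>k. D2 u (f k)) sums D2 u v"
  unfolding D2_def by (intro sums_add sums_diff sums_mult sums_mult2 assms)

lemma sums_nonneg': "f sums s \<Longrightarrow> (\<And>n. 0 \<le> f n) \<Longrightarrow> 0 \<le> (s::real)"
  by (metis sums_unique sums_summable suminf_nonneg)

lemma sign3:
  fixes Kc :: "nat \<Rightarrow> nat \<Rightarrow> real" and w0 w1 w2 :: "nat \<Rightarrow> real"
  assumes s0: "\<And>i. summable (\<lambda>k. Kc k i * w0 k)"
    and s1: "\<And>i. summable (\<lambda>k. Kc k i * w1 k)"
    and s2: "\<And>i. summable (\<lambda>k. Kc k i * w2 k)"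
    and sr: "\<And>k1 k2 k3. w0 k1 \<noteq> 0 \<Longrightarrow> w1 k2 \<noteq> 0 \<Longrightarrow> w2 k3 \<noteq> 0 \<Longrightarrow> 0 \<le> e * D3 (Kc k1) (Kc k2) (Kc k3)"
    and nn: "\<And>k. 0 \<le> w0 k" "\<And>k. 0 \<le> w1 k" "\<And>k. 0 \<le> w2 k"
  shows "0 \<le> e * D3 (\<lambda>i. \<Sum>k. Kc k i * w0 k) (\<lambda>i. \<Sum>k. Kc k i * w1 k) (\<lambda>i. \<Sum>k. Kc k i * w2 k)"
proof -
  define H0 where "H0 = (\<lambda>i. \<Sum>k. Kc k i * w0 k)"
  define H1 where "H1 = (\<lambda>i. \<Sum>k. Kc k i * w1 k)"
  define H2 where "H2 = (\<lambda>i. \<Sum>k. Kc k i * w2 k)"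
  let ?c0 = "\<lambda>k i. Kc k i * w0 k"
  let ?c1 = "\<lambda>k i. Kc k i * w1 k"
  let ?c2 = "\<lambda>k i. Kc k i * w2 k"
  have inner: "0 \<le> e * D3 (?c0 k1) (?c1 k2) (?c2 k3)" for k1 k2 k3
  proof -
    have "e * D3 (?c0 k1) (?c1 k2) (?c2 k3) = w0 k1 * w1 k2 * w2 k3 * (e * D3 (Kc k1) (Kc k2) (Kc k3))"
      unfolding D3_def by (simp add: algebra_simps)
    moreover have "0 \<le> w0 k1 * w1 k2 * w2 k3 * (e * D3 (Kc k1) (Kc k2) (Kc k3))"
    proof (cases "w0 k1 \<noteq> 0 \<and> w1 k2 \<noteq> 0 \<and> w2 k3 \<noteq> 0")
      case True thus ?thesis using mult_nonneg_nonneg[OF mult_nonneg_nonneg[OF mult_nonneg_nonneg[OF nn(1) nn(2)] nn(3)] sr[of k1 k2 k3]] by auto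
    next
      case False thus ?thesis by auto
    qed
    ultimately show ?thesis by metis
  qed
  have t3: "(\<lambda>k3. e * D3 (?c0 k1) (?c1 k2) (?c2 k3)) sums (e * D3 (?c0 k1) (?c1 k2) H2)" for k1 k2
    unfolding H2_def by (intro sums_mult D3_sums3 summable_sums s2)
  have t2: "(\<lambda>k2. e * D3 (?c0 k1) (?c1 k2) H2) sums (e * D3 (?c0 k1) H1 H2)" for k1
    unfolding H1_def by (intro sums_mult D3_sums2 summable_sums s1)
  have t1: "(\<lambda>k1. e * D3 (?c0 k1) H1 H2) sums (e * D3 H0 H1 H2)"
    unfolding H0_def by (intro sums_mult D3_sums1 summable_sums s0)
  have "0 \<le> e * D3 (?c0 k1) (?c1 k2) H2" for k1 k2 by (rule sums_nonneg'[OF t3 inner])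
  hence "0 \<le> e * D3 (?c0 k1) H1 H2" for k1 by (intro sums_nonneg'[OF t2])
  hence "0 \<le> e * D3 H0 H1 H2" by (intro sums_nonneg'[OF t1])
  thus ?thesis unfolding H0_def H1_def H2_def .
qed

lemma sign2:
  fixes Kc :: "nat \<Rightarrow> nat \<Rightarrow> real" and w0 w1 :: "nat \<Rightarrow> real"
  assumes s0: "\<And>i. summable (\<lambda>k. Kc k i * w0 k)"
    and s1: "\<And>i. summable (\<lambda>k. Kc k i * w1 k)"
    and sr: "\<And>k1 k2. w0 k1 \<noteq> 0 \<Longrightarrow> w1 k2 \<noteq> 0 \<Longrightarrow> 0 \<le> e * D2 (Kc k1) (Kc k2)"
    and nn: "\<And>k. 0 \<le> w0 k" "\<And>k. 0 \<le> w1 k"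
  shows "0 \<le> e * D2 (\<lambda>i. \<Sum>k. Kc k i * w0 k) (\<lambda>i. \<Sum>k. Kc k i * w1 k)"
proof -
  define H0 where "H0 = (\<lambda>i. \<Sum>k. Kc k i * w0 k)"
  define H1 where "H1 = (\<lambda>i. \<Sum>k. Kc k i * w1 k)"
  let ?c0 = "\<lambda>k i. Kc k i * w0 k"
  let ?c1 = "\<lambda>k i. Kc k i * w1 k"
  have inner: "0 \<le> e * D2 (?c0 k1) (?c1 k2)" for k1 k2
  proof -
    have "e * D2 (?c0 k1) (?c1 k2) = w0 k1 * w1 k2 * (e * D2 (Kc k1) (Kc k2))"
      unfolding D2_def by (simp add: algebra_simps)
    moreover have "0 \<le> w0 k1 * w1 k2 * (e * D2 (Kc k1) (Kc k2))"
    proof (cases "w0 k1 \<noteq> 0 \<and> w1 k2 \<noteq> 0")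
      case True thus ?thesis using mult_nonneg_nonneg[OF mult_nonneg_nonneg[OF nn(1) nn(2)] sr[of k1 k2]] by auto
    next
      case False thus ?thesis by auto
    qed
    ultimately show ?thesis by metis
  qed
  have t2: "(\<lambda>k2. e * D2 (?c0 k1) (?c1 k2)) sums (e * D2 (?c0 k1) H1)" for k1
    unfolding H1_def by (intro sums_mult D2_sums2 summable_sums s1)
  have t1: "(\<lambda>k1. e * D2 (?c0 k1) H1) sums (e * D2 H0 H1)"
    unfolding H0_def by (intro sums_mult D2_sums1 summable_sums s0)
  have "0 \<le> e * D2 (?c0 k1) H1" for k1 by (rule sums_nonneg'[OF t2 inner])
  hence "0 \<le> e * D2 H0 H1" by (intro sums_nonneg'[OF t1])
  thus ?thesis unfolding H0_def H1_def .
qed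

lemma G0G1:
  fixes x :: "nat \<Rightarrow> nat \<Rightarrow> real"
  assumes nn: "\<And>i j. i < 3 \<Longrightarrow> j < 3 \<Longrightarrow> 0 \<le> x i j"
    and A2: "x 0 0 * x 1 1 = x 0 1 * x 1 0" and B2: "x 0 0 * x 1 2 = x 0 2 * x 1 0"
    and M2: "x 0 1 * x 1 2 = x 0 2 * x 1 1"
  shows "0 \<le> (- x 0 0 + x 0 1 - x 0 2) * (- x 1 0 + x 1 1 - x 1 2)"
proof -
  define G0 where "G0 = - x 0 0 + x 0 1 - x 0 2"
  define G1 where "G1 = - x 1 0 + x 1 1 - x 1 2"
  have "0 \<le> G0 * G1"
  proof (cases "x 0 0 > 0")
    case True
    have "x 0 0 * G1 = x 1 0 * G0" unfolding G0_def G1_def using A2 B2 by (simp add: algebra_simps)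
    hence "x 0 0 * (G0 * G1) = x 1 0 * G0^2" by (simp add: power2_eq_square algebra_simps)
    hence "0 \<le> x 0 0 * (G0 * G1)" using nn by simp
    thus ?thesis using True by (simp add: zero_le_mult_iff)
  next
    case False
    hence x00: "x 0 0 = 0" using nn[of 0 0] by simp
    show ?thesis
    proof (cases "x 0 1 > 0")
      case True
      have "x 1 0 = 0" using A2 x00 True by simp
      hence "x 0 1 * G1 = x 1 1 * G0" unfolding G0_def G1_def using M2 x00 by (simp add: algebra_simps)
      hence "x 0 1 * (G0 * G1) = x 1 1 * G0^2" by (simp add: power2_eq_square algebra_simps)
      hence "0 \<le> x 0 1 * (G0 * G1)" using nn by simp
      thus ?thesis using True by (simp add: zero_le_mult_iff)
    next
      case False
      hence x01: "x 0 1 = 0" using nn[of 0 1] by simp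
      show ?thesis
      proof (cases "x 0 2 > 0")
        case True
        have "x 1 0 = 0" using B2 x00 True by simp
        moreover have "x 1 1 = 0" using M2 x01 True by simp
        ultimately show ?thesis unfolding G0_def G1_def using x00 x01 nn[of 0 2] nn[of 1 2]
          by (simp add: zero_le_mult_iff)
      next
        case False
        hence "x 0 2 = 0" using nn[of 0 2] by simp
        thus ?thesis unfolding G0_def using x00 x01 by simp
      qed
    qed
  qed
  thus ?thesis unfolding G0_def G1_def .
qed

lemma alg9:
  fixes x :: "nat \<Rightarrow> nat \<Rightarrow> real"
  assumes e2: "e2 = 1 \<or> e2 = -1" and e3: "e3 = 1 \<or> e3 = -1"
    and nn: "\<And>i j. i < 3 \<Longrightarrow> j < 3 \<Longrightarrow> 0 \<le> x i j"
    and d3: "0 \<le> e3 * D3 (\<lambda>i. x i 0) (\<lambda>i. x i 1) (\<lambda>i. x i 2)"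
    and d2: "\<And>i i' a b. i < i' \<Longrightarrow> i' < 3 \<Longrightarrow> a < b \<Longrightarrow> b < 3 \<Longrightarrow> 0 \<le> e2 * (x i a * x i' b - x i b * x i' a)"
  shows "\<not> (0 < e2*e3*(- x 0 0 + x 0 1 - x 0 2) \<and> e2*e3*(- x 1 0 + x 1 1 - x 1 2) < 0
           \<and> 0 < e2*e3*(- x 2 0 + x 2 1 - x 2 2))"
proof
  define s where "s = e2 * e3"
  define G where "G = (\<lambda>i. - x i 0 + x i 1 - x i 2)"
  assume "0 < e2*e3*(- x 0 0 + x 0 1 - x 0 2) \<and> e2*e3*(- x 1 0 + x 1 1 - x 1 2) < 0
           \<and> 0 < e2*e3*(- x 2 0 + x 2 1 - x 2 2)"
  hence g0: "0 < s * G 0" and g1: "s * G 1 < 0" and g2: "0 < s * G 2" unfolding s_def G_def by auto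
  have se2: "s * e2 = e3" unfolding s_def using e2 by auto
  have key: "M0 = 0 \<and> M1 = 0 \<and> M2 = 0"
    if id: "G 0 * M0 - G 1 * M1 + G 2 * M2 = - D3 (\<lambda>i. x i 0) (\<lambda>i. x i 1) (\<lambda>i. x i 2)"
     and m: "0 \<le> e2 * M0" "0 \<le> e2 * M1" "0 \<le> e2 * M2" for M0 M1 M2
  proof -
    have "e3 * (G 0 * M0 - G 1 * M1 + G 2 * M2) \<le> 0" using id d3 by simp
    moreover have "e3 * (G 0 * M0 - G 1 * M1 + G 2 * M2) = (s * G 0) * (e2 * M0) + (- (s * G 1)) * (e2 * M1) + (s * G 2) * (e2 * M2)"
      using se2[symmetric] by (simp add: algebra_simps)
    moreover have "0 \<le> (s * G 0) * (e2 * M0)" "0 \<le> (s * G 2) * (e2 * M2)"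
      using g0 g2 m by auto
    moreover have "0 \<le> (- (s * G 1)) * (e2 * M1)"
      by (rule mult_nonneg_nonneg) (use g1 m in auto)
    ultimately have "(s * G 0) * (e2 * M0) = 0" "(- (s * G 1)) * (e2 * M1) = 0" "(s * G 2) * (e2 * M2) = 0"
      by linarith+
    thus ?thesis using g0 g1 g2 e2 by auto
  qed
  have kM: "x 0 1 * x 1 2 - x 0 2 * x 1 1 = 0"
    using key[of "x 1 1 * x 2 2 - x 1 2 * x 2 1" "x 0 1 * x 2 2 - x 0 2 * x 2 1" "x 0 1 * x 1 2 - x 0 2 * x 1 1"]
      d2[of 1 2 1 2] d2[of 0 2 1 2] d2[of 0 1 1 2]
    unfolding G_def D3_def by (simp add: algebra_simps)
  have kA: "x 0 0 * x 1 1 - x 0 1 * x 1 0 = 0"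
    using key[of "x 1 0 * x 2 1 - x 1 1 * x 2 0" "x 0 0 * x 2 1 - x 0 1 * x 2 0" "x 0 0 * x 1 1 - x 0 1 * x 1 0"]
      d2[of 1 2 0 1] d2[of 0 2 0 1] d2[of 0 1 0 1]
    unfolding G_def D3_def by (simp add: algebra_simps)
  have kB: "x 0 0 * x 1 2 - x 0 2 * x 1 0 = 0"
    using key[of "x 1 0 * x 2 2 - x 1 2 * x 2 0" "x 0 0 * x 2 2 - x 0 2 * x 2 0" "x 0 0 * x 1 2 - x 0 2 * x 1 0"]
      d2[of 1 2 0 2] d2[of 0 2 0 2] d2[of 0 1 0 2]
    unfolding G_def D3_def by (simp add: algebra_simps)
  have "0 \<le> G 0 * G 1" unfolding G_def
    by (rule G0G1[OF nn]) (use kM kA kB in auto)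
  moreover have "s * G 0 * (s * G 1) < 0" using g0 g1 by (simp add: mult_pos_neg)
  moreover have "s * s = 1" unfolding s_def using e2 e3 by auto
  ultimately show False by (metis mult.assoc mult.commute mult.left_neutral not_less)
qed



lemma prod_list_nth: "prod_list (map f xs) = (\<Prod>i<length xs. f (xs ! i))"
  by (simp add: prod.list_conv_set_nth atLeast0LessThan)

lemma poly_esym:
  "prod_list (map (\<lambda>a. a + t) xs) = (\<Sum>j\<le>length xs. esym j xs * t ^ (length xs - j))"
proof -
  let ?I = "{..<length xs}"
  have "prod_list (map (\<lambda>a. a + t) xs) = (\<Prod>i\<in>?I. xs ! i + t)" by (simp add: prod_list_nth)
  also have "\<dots> = (\<Sum>S\<in>Pow ?I. (\<Prod>i\<in>S. xs ! i) * (\<Prod>i\<in>?I - S. t))"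
    by (rule prod_add) simp
  also have "\<dots> = (\<Sum>S\<in>Pow ?I. (\<Prod>i\<in>S. xs ! i) * t ^ (length xs - card S))"
  proof (rule sum.cong)
    fix S assume "S \<in> Pow ?I"
    hence "card (?I - S) = length xs - card S" by (simp add: card_Diff_subset finite_subset)
    thus "(\<Prod>i\<in>S. xs ! i) * (\<Prod>i\<in>?I - S. t) = (\<Prod>i\<in>S. xs ! i) * t ^ (length xs - card S)"
      by simp
  qed simp
  also have "\<dots> = (\<Sum>j\<le>length xs. \<Sum>S\<in>{S. S \<in> Pow ?I \<and> card S = j}. (\<Prod>i\<in>S. xs ! i) * t ^ (length xs - card S))"
    by (rule sum.group[symmetric]) (auto simp: card_mono[of ?I, simplified])
  also have "\<dots> = (\<Sum>j\<le>length xs. esym j xs * t ^ (length xs - j))"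
    unfolding esym_def by (intro sum.cong refl) (auto simp: sum_distrib_right intro!: sum.cong)
  finally show ?thesis .
qed

lemma esym_nonneg: assumes "\<forall>v\<in>set xs. v > 0" shows "0 \<le> esym j xs"
  unfolding esym_def
  by (intro sum_nonneg prod_nonneg) (use assms in \<open>auto simp: less_imp_le\<close>)

lemma esym_pos: assumes "\<forall>v\<in>set xs. v > 0" "j \<le> length xs" shows "0 < esym j xs"
  unfolding esym_def
proof (rule sum_pos2)
  show "finite {S. S \<subseteq> {..<length xs} \<and> card S = j}" by (rule finite_subset[of _ "Pow {..<length xs}"]) auto
  show "{..<j} \<in> {S. S \<subseteq> {..<length xs} \<and> card S = j}" using assms(2) by auto
  show "0 < (\<Prod>i\<in>{..<j}. xs ! i)" using assms by (intro prod_pos) auto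
  show "\<And>S. S \<in> {S. S \<subseteq> {..<length xs} \<and> card S = j} \<Longrightarrow> 0 \<le> (\<Prod>i\<in>S. xs ! i)"
    using assms by (intro prod_nonneg) (auto simp: less_imp_le)
qed

lemma pow_swap:
  fixes t t' :: real assumes "0 \<le> t" "t \<le> t'" "b \<le> a"
  shows "t ^ a * t' ^ b \<le> t' ^ a * t ^ b"
proof -
  have a: "a = b + (a - b)" using assms by simp
  have "t ^ (a - b) \<le> t' ^ (a - b)" using assms by (intro power_mono) auto
  hence "t ^ (a - b) * (t ^ b * t' ^ b) \<le> t' ^ (a - b) * (t ^ b * t' ^ b)"
    using assms by (intro mult_right_mono) auto
  thus ?thesis by (subst (1 2) a) (simp add: power_add algebra_simps)
qed

lemma descartes:
  fixes A B :: "real list" and t t' :: real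
  assumes posA: "\<forall>v\<in>set A. v > 0" and posB: "\<forall>v\<in>set B. v > 0"
    and mn: "length A \<le> length B"
    and chain: "\<forall>k < length A. esym (length B - k) B / esym (length A - k) A
        \<le> esym (length B - k - 1) B / esym (length A - k - 1) A"
    and t: "0 \<le> t" "t \<le> t'"
  shows "prod_list (map (\<lambda>b. b + t) B) * prod_list (map (\<lambda>a. a + t') A)
       \<le> prod_list (map (\<lambda>b. b + t') B) * prod_list (map (\<lambda>a. a + t) A)"
proof -
  define m where "m = length A"
  define n where "n = length B"
  define eA where "eA = (\<lambda>j. esym j A)"
  define eB where "eB = (\<lambda>j. esym j B)"
  define \<rho> where "\<rho> = (\<lambda>j. eB (n - m + j) / eA j)"
  have eApos: "j \<le> m \<Longrightarrow> 0 < eA j" for j unfolding eA_def m_def using esym_pos[OF posA] by auto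
  have eAnn: "0 \<le> eA j" for j unfolding eA_def using esym_nonneg[OF posA] by auto
  have eBnn: "0 \<le> eB j" for j unfolding eB_def using esym_nonneg[OF posB] by auto
  have rstep: "\<rho> (Suc j) \<le> \<rho> j" if "j < m" for j
  proof -
    define k where "k = m - Suc j"
    have "k < length A" using that unfolding k_def m_def by simp
    from chain[rule_format, OF this]
    have "esym (n - k) B / esym (m - k) A \<le> esym (n - k - 1) B / esym (m - k - 1) A"
      unfolding m_def n_def .
    moreover have "n - k = n - m + Suc j" "m - k = Suc j" "n - k - 1 = n - m + j" "m - k - 1 = j"
      using that mn unfolding k_def m_def n_def by auto
    ultimately show ?thesis unfolding \<rho>_def eA_def eB_def by simp
  qed
  have rho_mono: "\<rho> l \<le> \<rho> j" if "j \<le> l" "l \<le> m" for j l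
    using that
  proof (induction l rule: dec_induct)
    case base thus ?case by simp
  next
    case (step l) thus ?case using rstep[of l] by simp
  qed
  have eBtop: "eB (n - m + j) = \<rho> j * eA j" if "j \<le> m" for j
    unfolding \<rho>_def using eApos[OF that] by simp
  define P where "P = (\<lambda>s::real. \<Sum>j\<le>m. eA j * s ^ (m - j))"
  define R where "R = (\<lambda>s::real. \<Sum>i<n-m. eB i * s ^ (n - i))"
  define Q1 where "Q1 = (\<lambda>s::real. \<Sum>j\<le>m. \<rho> j * eA j * s ^ (m - j))"
  have Peq: "prod_list (map (\<lambda>a. a + s) A) = P s" for s
    unfolding P_def eA_def m_def by (rule poly_esym)
  have Qeq: "prod_list (map (\<lambda>b. b + s) B) = R s + Q1 s" for s
  proof -
    have "prod_list (map (\<lambda>b. b + s) B) = (\<Sum>i\<le>n. eB i * s ^ (n - i))"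
      unfolding eB_def n_def by (rule poly_esym)
    also have "{..n} = {..<n-m} \<union> {n-m..n}" by auto
    also have "(\<Sum>i\<in>{..<n-m} \<union> {n-m..n}. eB i * s ^ (n - i))
        = R s + (\<Sum>i\<in>{n-m..n}. eB i * s ^ (n - i))"
      unfolding R_def by (subst sum.union_disjoint) auto
    also have "(\<Sum>i\<in>{n-m..n}. eB i * s ^ (n - i)) = (\<Sum>j\<in>{0..m}. eB (n - m + j) * s ^ (n - (n - m + j)))"
      using mn unfolding m_def n_def by (subst sum.atLeastAtMost_shift_0) (auto simp: comp_def)
    also have "\<dots> = Q1 s" unfolding Q1_def
    proof (intro sum.cong)
      fix j assume "j \<in> {..m}"
      hence j: "j \<le> m" by simp
      have "n - (n - m + j) = m - j" using j mn unfolding m_def n_def by simp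
      thus "eB (n - m + j) * s ^ (n - (n - m + j)) = \<rho> j * eA j * s ^ (m - j)"
        using eBtop[OF j] by simp
    qed auto
    finally show ?thesis .
  qed
  have c1: "R t * P t' \<le> R t' * P t"
  proof -
    have "R t * P t' = (\<Sum>i<n-m. \<Sum>j\<le>m. eB i * eA j * (t ^ (n - i) * t' ^ (m - j)))"
      unfolding R_def P_def sum_product by (simp add: algebra_simps)
    also have "\<dots> \<le> (\<Sum>i<n-m. \<Sum>j\<le>m. eB i * eA j * (t' ^ (n - i) * t ^ (m - j)))"
      by (intro sum_mono mult_left_mono pow_swap t mult_nonneg_nonneg eAnn eBnn) auto
    also have "\<dots> = R t' * P t"
      unfolding R_def P_def sum_product by (simp add: algebra_simps)
    finally show ?thesis .
  qed
  have c2: "Q1 t * P t' \<le> Q1 t' * P t"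
  proof -
    define Z where "Z = (\<lambda>j l. eA j * eA l * (t ^ (m - j) * t' ^ (m - l)) * (\<rho> j - \<rho> l))"
    have "Q1 t * P t' = (\<Sum>j\<le>m. \<Sum>l\<le>m. \<rho> j * eA j * eA l * (t ^ (m - j) * t' ^ (m - l)))"
      unfolding Q1_def P_def sum_product by (simp add: algebra_simps)
    moreover have "Q1 t' * P t = (\<Sum>j\<le>m. \<Sum>l\<le>m. \<rho> j * eA j * eA l * (t' ^ (m - j) * t ^ (m - l)))"
      unfolding Q1_def P_def sum_product by (simp add: algebra_simps)
    moreover have "\<dots> = (\<Sum>j\<le>m. \<Sum>l\<le>m. \<rho> l * eA l * eA j * (t' ^ (m - l) * t ^ (m - j)))"
      by (rule sum.swap)
    ultimately have d: "Q1 t * P t' - Q1 t' * P t = (\<Sum>j\<le>m. \<Sum>l\<le>m. Z j l)"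
      unfolding Z_def by (simp add: sum_subtractf[symmetric] algebra_simps)
    have sw: "(\<Sum>j\<le>m. \<Sum>l\<le>m. Z j l) = (\<Sum>j\<le>m. \<Sum>l\<le>m. Z l j)" by (rule sum.swap)
    have "2 * (\<Sum>j\<le>m. \<Sum>l\<le>m. Z j l) = (\<Sum>j\<le>m. \<Sum>l\<le>m. Z j l + Z l j)"
      using sw by (simp add: sum.distrib)
    also have "\<dots> \<le> 0"
    proof (intro sum_nonpos)
      fix j l assume jl: "j \<in> {..m}" "l \<in> {..m}"
      have e: "Z j l + Z l j = eA j * eA l * ((\<rho> j - \<rho> l) * (t ^ (m - j) * t' ^ (m - l) - t' ^ (m - j) * t ^ (m - l)))"
        unfolding Z_def by (simp add: algebra_simps)
      have "(\<rho> j - \<rho> l) * (t ^ (m - j) * t' ^ (m - l) - t' ^ (m - j) * t ^ (m - l)) \<le> 0"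
      proof (cases "j \<le> l")
        case True
        have "\<rho> l \<le> \<rho> j" using rho_mono[OF True] jl by auto
        moreover have "t ^ (m - j) * t' ^ (m - l) \<le> t' ^ (m - j) * t ^ (m - l)"
          using True by (intro pow_swap t) auto
        ultimately show ?thesis by (simp add: mult_nonneg_nonpos)
      next
        case False
        have "\<rho> j \<le> \<rho> l" using rho_mono[of l j] False jl by auto
        moreover have "t ^ (m - l) * t' ^ (m - j) \<le> t' ^ (m - l) * t ^ (m - j)"
          using False by (intro pow_swap t) auto
        ultimately show ?thesis by (simp add: mult_nonpos_nonneg mult.commute)
      qed
      thus "Z j l + Z l j \<le> 0" unfolding e using eAnn[of j] eAnn[of l]
        by (simp add: mult_nonneg_nonpos)
    qed
    finally show ?thesis using d by simp
  qed
  show ?thesis unfolding Peq Qeq using c1 c2 by (simp add: algebra_simps)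
qed



lemma qc_unimodal:
  fixes f :: "real \<Rightarrow> real"
  assumes cont: "\<And>\<mu>. 0 < \<mu> \<Longrightarrow> isCont f \<mu>"
    and qc: "\<And>x y z. 0 < x \<Longrightarrow> x < y \<Longrightarrow> y < z \<Longrightarrow> min (f x) (f z) \<le> f y"
  shows "unimodal_on {0<..} f"
proof -
  define D where "D = {y. 0 < y \<and> (\<exists>z. 0 < z \<and> z < y \<and> f y < f z)}"
  have F1: "f w \<le> f y \<and> w \<in> D" if yD: "y \<in> D" and yw: "y < w" for y w
  proof -
    obtain z where z: "0 < z" "z < y" "f y < f z" using yD unfolding D_def by auto
    have "min (f z) (f w) \<le> f y" using qc[of z y w] z yw by auto
    hence "f w \<le> f y" using z by linarith
    moreover have "w \<in> D" unfolding D_def using z yw \<open>f w \<le> f y\<close> by (auto intro!: exI[of _ z])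
    ultimately show ?thesis by simp
  qed
  have F2: "f z \<le> f y" if "0 < z" "z < y" "y \<notin> D" for y z
    using that unfolding D_def by force
  show ?thesis
  proof (cases "D = {}")
    case True
    have "monotone_on {y \<in> {0<..}. 0 \<le> y} (\<le>) (\<le>) f"
      unfolding monotone_on_def using F2 True by (metis empty_iff greaterThan_iff mem_Collect_eq order_le_less)
    moreover have "monotone_on {y \<in> {0<..}. y \<le> 0} (\<le>) (\<ge>) f"
      unfolding monotone_on_def by auto
    ultimately show ?thesis unfolding unimodal_on_def by blast
  next
    case False
    define t where "t = Inf D"
    have bdd: "bdd_below D" unfolding D_def bdd_below_def by (rule exI[of _ 0]) auto
    have t0: "0 \<le> t" unfolding t_def using False by (intro cInf_greatest) (auto simp: D_def)
    have below: "y \<notin> D" if "y < t" for y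
      using cInf_lower[OF _ bdd, of y] that unfolding t_def by auto
    have above: "y \<in> D" if ty: "t < y" for y
    proof -
      obtain d where "d \<in> D" "d < y" using ty False bdd unfolding t_def by (meson cInf_less_iff)
      thus ?thesis using F1 by blast
    qed
    show ?thesis
    proof (cases "t = 0")
      case True
      have "monotone_on {y \<in> {0<..}. 0 \<le> y} (\<le>) (\<ge>) f"
        unfolding monotone_on_def
      proof (intro ballI impI)
        fix a b :: real assume ab0: "a \<in> {y \<in> {0<..}. 0 \<le> y}" "b \<in> {y \<in> {0<..}. 0 \<le> y}" "a \<le> b"
        note ab = ab0
        show "f b \<le> f a"
        proof (cases "a = b")
          case False thus ?thesis using F1[of a b] above[of a] ab True by auto
        qed simp
      qed
      moreover have "monotone_on {y \<in> {0<..}. y \<le> 0} (\<le>) (\<le>) f"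
        unfolding monotone_on_def by auto
      ultimately show ?thesis unfolding unimodal_on_def by blast
    next
      case False
      hence tpos: "0 < t" using t0 by simp
      have tD: "t \<notin> D"
      proof
        assume "t \<in> D"
        then obtain z where z: "0 < z" "z < t" "f t < f z" unfolding D_def by auto
        have "((\<lambda>y. f y) \<longlongrightarrow> f t) (at_left t)"
          using cont[OF tpos] by (simp add: isCont_def filterlim_at_split)
        hence ev1: "eventually (\<lambda>y. f y < f z) (at_left t)"
          using z(3) by (rule order_tendstoD)
        have ev2: "eventually (\<lambda>y. z < y \<and> y < t) (at_left t)"
          using eventually_at_left_real[OF z(2)] by auto
        obtain y where "f y < f z" "z < y" "y < t"
          using eventually_happens'[OF _ eventually_conj[OF ev1 ev2]] by auto
        hence "y \<in> D" unfolding D_def using z by auto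
        thus False using below \<open>y < t\<close> by auto
      qed
      have m1: "monotone_on {y \<in> {0<..}. y \<le> t} (\<le>) (\<le>) f"
        unfolding monotone_on_def
      proof (intro ballI impI)
        fix a b :: real assume ab0: "a \<in> {y \<in> {0<..}. y \<le> t}" "b \<in> {y \<in> {0<..}. y \<le> t}" "a \<le> b"
        note ab = ab0
        show "f a \<le> f b"
        proof (cases "a = b")
          case False
          hence "b \<notin> D" using below tD ab by (cases "b = t") auto
          thus ?thesis using F2[of a b] ab False by auto
        qed simp
      qed
      have m2: "monotone_on {y \<in> {0<..}. t \<le> y} (\<le>) (\<ge>) f"
        unfolding monotone_on_def
      proof (intro ballI impI)
        fix a b :: real assume ab0: "a \<in> {y \<in> {0<..}. t \<le> y}" "b \<in> {y \<in> {0<..}. t \<le> y}" "a \<le> b"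
        note ab = ab0
        show "f b \<le> f a"
        proof (cases "a = b")
          case False
          show ?thesis
          proof (cases "a = t")
            case False
            hence "a \<in> D" using above ab by auto
            thus ?thesis using F1[of a b] ab \<open>a \<noteq> b\<close> by auto
          next
            case True
            have tb: "t < b" using ab True \<open>a \<noteq> b\<close> by auto
            have "((\<lambda>y. f y) \<longlongrightarrow> f t) (at_right t)"
              using cont[OF tpos] by (simp add: isCont_def filterlim_at_split)
            moreover have "eventually (\<lambda>y. f b \<le> f y) (at_right t)"
            proof -
              have "eventually (\<lambda>y. t < y \<and> y < b) (at_right t)"
                using eventually_at_right_real[OF tb] by auto
              thus ?thesis
                by eventually_elim (use F1 above in \<open>auto simp: less_imp_le\<close>)
            qed
            ultimately have "f b \<le> f t" by (intro tendsto_lowerbound) auto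
            thus ?thesis using True by simp
          qed
        qed simp
      qed
      show ?thesis unfolding unimodal_on_def using m1 m2 by blast
    qed
  qed
qed

lemma unimodal_neg: "unimodal_on S (\<lambda>x. - f x) \<Longrightarrow> unimodal_on S f"
  unfolding unimodal_on_def monotone_on_def by (auto simp del: le_minus_iff)


lemma det1': "Determinant.det (Matrix.mat (Suc 0) (Suc 0) f) = (f (0,0) :: real)"
  by (subst laplace_expansion_column[of _ 1 0]) (auto simp: cofactor_def mat_delete_def det_def)
lemma det2': "Determinant.det (Matrix.mat (Suc (Suc 0)) (Suc (Suc 0)) f) = (f (0,0) * f(1,1) - f(0,1)*f(1,0) :: real)"
  apply (subst laplace_expansion_column[of _ 2 0]) apply auto
  apply (simp add: cofactor_def numeral_2_eq_2 lessThan_Suc)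
  apply (simp add: mat_delete_def det1')
  done
lemma det1: "Determinant.det (Matrix.mat 1 1 f) = (f (0,0) :: real)"
  using det1' by simp
lemma det2: "Determinant.det (Matrix.mat 2 2 f) = (f (0,0) * f(1,1) - f(0,1)*f(1,0) :: real)"
  using det2' by (simp add: numeral_2_eq_2)
lemma det3: "Determinant.det (Matrix.mat 3 3 f) = (f (0,0) * (f(1,1)*f(2,2) - f(1,2)*f(2,1))
   - f(1,0) * (f(0,1)*f(2,2) - f(0,2)*f(2,1)) + f(2,0) * (f(0,1)*f(1,2) - f(0,2)*f(1,1)) :: real)"
  apply (subst laplace_expansion_column[of _ 3 0]) apply auto
  apply (simp add: cofactor_def numeral_3_eq_3 lessThan_Suc)
  apply (simp add: mat_delete_def det2' numeral_2_eq_2)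
  done


lemma poch_vec_append: "poch_vec (xs @ ys) k = poch_vec xs k * poch_vec ys k"
  unfolding poch_vec_def by simp

lemma poch_vec_0[simp]: "poch_vec xs 0 = 1"
  unfolding poch_vec_def by (induction xs) auto

lemma poch_vec_pos: "\<forall>v\<in>set xs. v > 0 \<Longrightarrow> 0 < poch_vec xs k"
  unfolding poch_vec_def by (induction xs) (auto intro!: mult_pos_pos pochhammer_pos)

lemma poch_vec_Suc: "poch_vec xs (Suc k) = poch_vec xs k * prod_list (map (\<lambda>a. a + real k) xs)"
  unfolding poch_vec_def by (induction xs) (auto simp: pochhammer_Suc algebra_simps)

lemma poch_vec_shift_Cons: "poch_vec (shift_vec (c # cs) \<mu>) k = pochhammer (c + \<mu>) k * poch_vec (shift_vec cs \<mu>) k"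
  unfolding poch_vec_def shift_vec_def by simp

lemma isCont_poch_vec: "isCont (\<lambda>\<mu>. poch_vec (shift_vec cs \<mu>) k) \<mu>"
proof (induction cs)
  case Nil thus ?case by (simp add: poch_vec_def shift_vec_def)
next
  case (Cons c cs)
  have "isCont (\<lambda>\<mu>. pochhammer (c + \<mu>) k) \<mu>"
    unfolding pochhammer_prod by (intro continuous_intros)
  thus ?case unfolding poch_vec_shift_Cons using Cons by (intro continuous_intros)
qed

lemma prod_list_shift_pos: "\<forall>v\<in>set xs. v > 0 \<Longrightarrow> 0 \<le> (t::real) \<Longrightarrow> 0 < prod_list (map (\<lambda>a. a + t) xs)"
  by (induction xs) (auto simp: add_pos_nonneg)

lemma r_qc:
  fixes A B :: "real list" and r :: "nat \<Rightarrow> real"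
  assumes posA: "\<forall>v\<in>set A. v > 0" and posB: "\<forall>v\<in>set B. v > 0"
    and mn: "length A \<le> length B"
    and chain: "\<forall>k < length A. esym (length B - k) B / esym (length A - k) A
        \<le> esym (length B - k - 1) B / esym (length A - k - 1) A"
    and r_def: "\<And>k. r k = poch_vec A k / poch_vec B k"
  shows "i < j \<Longrightarrow> j < l \<Longrightarrow> min (r i) (r l) \<le> r j"
proof -
  define P where "P = (\<lambda>k::nat. prod_list (map (\<lambda>a. a + real k) A))"
  define Q where "Q = (\<lambda>k::nat. prod_list (map (\<lambda>a. a + real k) B))"
  have Ppos: "0 < P k" for k unfolding P_def by (rule prod_list_shift_pos[OF posA]) simp
  have Qpos: "0 < Q k" for k unfolding Q_def by (rule prod_list_shift_pos[OF posB]) simp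
  have rpos: "0 < r k" for k unfolding r_def using poch_vec_pos[OF posA] poch_vec_pos[OF posB] by simp
  have rSuc: "r (Suc k) = r k * P k / Q k" for k
    unfolding r_def P_def Q_def poch_vec_Suc by simp
  have rdown: "r (Suc k) \<le> r k \<longleftrightarrow> P k \<le> Q k" for k
  proof -
    have "r (Suc k) \<le> r k \<longleftrightarrow> r k * P k \<le> r k * Q k"
      unfolding rSuc using Qpos[of k] by (simp add: pos_divide_le_eq)
    also have "\<dots> \<longleftrightarrow> P k \<le> Q k" using rpos[of k] by (simp add: mult_le_cancel_left_pos)
    finally show ?thesis .
  qed
  have PQstep: "P k \<le> Q k \<Longrightarrow> P (Suc k) \<le> Q (Suc k)" for k
  proof -
    assume h: "P k \<le> Q k"
    have "Q k * P (Suc k) \<le> Q (Suc k) * P k"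
      unfolding P_def Q_def by (rule descartes[OF posA posB mn chain]) auto
    moreover have "P k * P (Suc k) \<le> Q k * P (Suc k)" using h Ppos by (simp add: mult_right_mono less_imp_le)
    ultimately have "P (Suc k) * P k \<le> Q (Suc k) * P k" by (simp add: mult.commute)
    thus ?thesis using Ppos[of k] by simp
  qed
  have down_prop: "r (Suc a) \<le> r a" if "r (Suc k) \<le> r k" "k \<le> a" for k a
    using that(2)
  proof (induction a rule: dec_induct)
    case base thus ?case using that(1) .
  next
    case (step a) thus ?case using PQstep rdown by blast
  qed
  have down_mono: "r b \<le> r a" if "r (Suc k) \<le> r k" "k \<le> a" "a \<le> b" for k a b
    using that(3)
  proof (induction b rule: dec_induct)
    case base thus ?case by simp
  next
    case (step b) thus ?case using down_prop[OF that(1), of b] that(2) by simp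
  qed
  have up_mono: "r i \<le> r j" if "\<And>k. i \<le> k \<Longrightarrow> k < j \<Longrightarrow> r k \<le> r (Suc k)" "i \<le> j" for i j
    using that(2,1)
  proof (induction j rule: dec_induct)
    case base thus ?case by simp
  next
    case (step j) thus ?case by (meson le_refl less_Suc_eq order.trans)
  qed
  assume ij: "i < j" and jl: "j < l"
  show "min (r i) (r l) \<le> r j"
  proof (cases "\<exists>k. i \<le> k \<and> k < j \<and> r (Suc k) \<le> r k")
    case True
    then obtain k where k: "i \<le> k" "k < j" "r (Suc k) \<le> r k" by auto
    have "r l \<le> r j" using down_mono[OF k(3), of j l] k jl by simp
    thus ?thesis by simp
  next
    case False
    hence "r i \<le> r j" using up_mono[of i j] ij by force
    thus ?thesis by simp
  qed
qed

lemma vd_core: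
  fixes K :: "real \<Rightarrow> nat \<Rightarrow> real" and \<alpha> \<beta> :: "nat \<Rightarrow> real" and y :: "nat \<Rightarrow> real" and lam :: real
  assumes Knn: "\<And>\<mu> k. 0 < \<mu> \<Longrightarrow> 0 \<le> K \<mu> k"
    and apos: "\<And>k. 0 < \<alpha> k" and bpos: "\<And>k. 0 < \<beta> k"
    and suma: "\<And>\<mu>. 0 < \<mu> \<Longrightarrow> summable (\<lambda>k. K \<mu> k * \<alpha> k)"
    and sumb: "\<And>\<mu>. 0 < \<mu> \<Longrightarrow> summable (\<lambda>k. K \<mu> k * \<beta> k)"
    and e2: "e2 = 1 \<or> e2 = -1" and e3: "e3 = 1 \<or> e3 = -1"
    and SR2: "\<And>\<mu> \<mu>' k k'. 0 < \<mu> \<Longrightarrow> \<mu> < \<mu>' \<Longrightarrow> k < k' \<Longrightarrow>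
                 0 \<le> e2 * (K \<mu> k * K \<mu>' k' - K \<mu> k' * K \<mu>' k)"
    and SR3: "\<And>y k0 k1 k2. 0 < y 0 \<Longrightarrow> y 0 < y 1 \<Longrightarrow> y 1 < y 2 \<Longrightarrow> k0 < k1 \<Longrightarrow> k1 < k2 \<Longrightarrow>
                 0 \<le> e3 * D3 (\<lambda>i. K (y i) k0) (\<lambda>i. K (y i) k1) (\<lambda>i. K (y i) k2)"
    and qc: "\<And>i j l. i < j \<Longrightarrow> j < l \<Longrightarrow> min (\<alpha> i / \<beta> i) (\<alpha> l / \<beta> l) \<le> \<alpha> j / \<beta> j"
    and y: "0 < y 0" "y 0 < y 1" "y 1 < y 2"
  defines "G \<equiv> (\<lambda>i. (\<Sum>k. K (y i) k * \<alpha> k) - lam * (\<Sum>k. K (y i) k * \<beta> k))"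
  shows "\<not> (0 < e2*e3*G 0 \<and> e2*e3*G 1 < 0 \<and> 0 < e2*e3*G 2)"
proof -
  define r where "r = (\<lambda>k. \<alpha> k / \<beta> k)"
  define g where "g = (\<lambda>k. \<alpha> k - lam * \<beta> k)"
  define ge where "ge = (\<lambda>k. lam \<le> r k)"
  define I1 where "I1 = (\<lambda>k. \<not> ge k \<and> (\<exists>j>k. ge j))"
  define I3 where "I3 = (\<lambda>k. \<not> ge k \<and> \<not> (\<exists>j>k. ge j))"
  define W where "W = (\<lambda>(j::nat) k. if j = 0 then (if I1 k then - g k else 0)
                         else if j = 1 then (if ge k then g k else 0)
                         else (if I3 k then - g k else 0))"
  have ge_g: "ge k \<longleftrightarrow> 0 \<le> g k" for k
    unfolding ge_def r_def g_def using bpos[of k] by (simp add: pos_le_divide_eq)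
  have Wnn: "0 \<le> W j k" for j k unfolding W_def I1_def I3_def using ge_g[of k] by auto
  have gdec: "g k = - W 0 k + W 1 k - W 2 k" for k unfolding W_def I1_def I3_def by auto
  have W0: "W 0 k \<noteq> 0 \<Longrightarrow> I1 k" and W1: "W 1 k \<noteq> 0 \<Longrightarrow> ge k" and W2: "W 2 k \<noteq> 0 \<Longrightarrow> I3 k" for k
    unfolding W_def by (auto split: if_splits)
  have o12: "k1 < k2" if h: "I1 k1" "ge k2" for k1 k2
  proof (rule ccontr)
    assume "\<not> k1 < k2"
    moreover have "k1 \<noteq> k2" using h unfolding I1_def by auto
    ultimately have "k2 < k1" by simp
    moreover obtain j where "j > k1" "ge j" using h unfolding I1_def by auto
    ultimately have "min (r k2) (r j) \<le> r k1" using qc unfolding r_def by blast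
    thus False using h \<open>ge j\<close> unfolding I1_def ge_def by auto
  qed
  have o23: "k2 < k3" if h: "ge k2" "I3 k3" for k2 k3
  proof (rule ccontr)
    assume "\<not> k2 < k3"
    moreover have "k3 \<noteq> k2" using h unfolding I3_def by auto
    ultimately have "k3 < k2" by simp
    thus False using h unfolding I3_def by auto
  qed
  have o13: "k1 < k3" if h: "I1 k1" "I3 k3" for k1 k3
  proof (rule ccontr)
    assume "\<not> k1 < k3"
    moreover have "k3 \<noteq> k1" using h unfolding I1_def I3_def by auto
    ultimately have "k3 < k1" by simp
    thus False using h unfolding I1_def I3_def by auto
  qed
  have yi: "0 < y i" if "i < 3" for i
    using that y by (auto simp: numeral_3_eq_3 numeral_2_eq_2 less_Suc_eq)
  have ymono: "y i < y i'" if "i < i'" "i' < 3" for i i'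
    using that y by (auto simp: numeral_3_eq_3 numeral_2_eq_2 less_Suc_eq)
  define yy where "yy = (\<lambda>i. y (min i 2))"
  have yyi: "0 < yy i" for i unfolding yy_def using yi[of "min i 2"] by simp
  have yyeq: "i < 3 \<Longrightarrow> yy i = y i" for i unfolding yy_def by simp
  have Wle: "W j k \<le> \<alpha> k + \<bar>lam\<bar> * \<beta> k" for j k
  proof -
    have "\<bar>g k\<bar> \<le> \<bar>\<alpha> k\<bar> + \<bar>lam * \<beta> k\<bar>" unfolding g_def by (rule abs_triangle_ineq4)
    also have "\<dots> = \<alpha> k + \<bar>lam\<bar> * \<beta> k" using apos[of k] bpos[of k] by (simp add: abs_mult)
    finally have a: "\<bar>g k\<bar> \<le> \<alpha> k + \<bar>lam\<bar> * \<beta> k" .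
    have "W j k \<le> \<bar>g k\<bar>" unfolding W_def by auto
    thus ?thesis using a by linarith
  qed
  have summ: "summable (\<lambda>k. K \<mu> k * W j k)" if "0 < \<mu>" for \<mu> j
  proof (rule summable_comparison_test')
    show "summable (\<lambda>k. K \<mu> k * \<alpha> k + \<bar>lam\<bar> * (K \<mu> k * \<beta> k))"
      using suma[OF that] sumb[OF that] by (intro summable_add summable_mult)
    fix k
    have "norm (K \<mu> k * W j k) = K \<mu> k * W j k" using Knn[OF that] Wnn by simp
    also have "\<dots> \<le> K \<mu> k * (\<alpha> k + \<bar>lam\<bar> * \<beta> k)" using Knn[OF that] Wle by (intro mult_left_mono)
    finally show "norm (K \<mu> k * W j k) \<le> K \<mu> k * \<alpha> k + \<bar>lam\<bar> * (K \<mu> k * \<beta> k)"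
      by (simp add: algebra_simps)
  qed
  define x where "x = (\<lambda>i j. \<Sum>k. K (yy i) k * W j k)"
  have Gx: "G i = - x i 0 + x i 1 - x i 2" if "i < 3" for i
  proof -
    have p: "0 < yy i" by (rule yyi)
    have s1: "(\<lambda>k. K (yy i) k * \<alpha> k - lam * (K (yy i) k * \<beta> k)) sums G i"
      unfolding G_def yyeq[OF that, symmetric]
      by (intro sums_diff sums_mult summable_sums suma sumb p)
    have s2: "(\<lambda>k. - (K (yy i) k * W 0 k) + K (yy i) k * W 1 k - K (yy i) k * W 2 k) sums (- x i 0 + x i 1 - x i 2)"
      unfolding x_def by (intro sums_diff sums_add sums_minus summable_sums summ p)
    have e: "(\<lambda>k. K (yy i) k * \<alpha> k - lam * (K (yy i) k * \<beta> k)) = (\<lambda>k. - (K (yy i) k * W 0 k) + K (yy i) k * W 1 k - K (yy i) k * W 2 k)"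
    proof
      fix k
      have "K (yy i) k * \<alpha> k - lam * (K (yy i) k * \<beta> k) = K (yy i) k * g k" unfolding g_def by (simp add: algebra_simps)
      also have "\<dots> = - (K (yy i) k * W 0 k) + K (yy i) k * W 1 k - K (yy i) k * W 2 k"
        unfolding gdec by (simp add: algebra_simps)
      finally show "K (yy i) k * \<alpha> k - lam * (K (yy i) k * \<beta> k) = - (K (yy i) k * W 0 k) + K (yy i) k * W 1 k - K (yy i) k * W 2 k" .
    qed
    show ?thesis using s1 s2 unfolding e using sums_unique2 by blast
  qed
  have nn: "0 \<le> x i j" if "i < 3" "j < 3" for i j
    unfolding x_def using summ[OF yyi] Knn[OF yyi] Wnn
    by (intro suminf_nonneg) (auto intro: mult_nonneg_nonneg)
  have d3: "0 \<le> e3 * D3 (\<lambda>i. x i 0) (\<lambda>i. x i 1) (\<lambda>i. x i 2)"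
    unfolding x_def
  proof (rule sign3[of "\<lambda>k i. K (yy i) k"])
    fix k1 k2 k3 assume "W 0 k1 \<noteq> 0" "W 1 k2 \<noteq> 0" "W 2 k3 \<noteq> 0"
    hence "k1 < k2" "k2 < k3" using W0 W1 W2 o12 o23 by blast+
    moreover have "0 < yy 0" "yy 0 < yy 1" "yy 1 < yy 2" using y by (simp_all add: yyeq)
    ultimately show "0 \<le> e3 * D3 (\<lambda>i. K (yy i) k1) (\<lambda>i. K (yy i) k2) (\<lambda>i. K (yy i) k3)"
      by (rule_tac SR3)
  qed (rule summ yyi Wnn)+
  have ordW: "k1 < k2" if "W a k1 \<noteq> 0" "W b k2 \<noteq> 0" "a < b" "b < 3" for a b k1 k2
  proof -
    have "(a = 0 \<and> b = 1) \<or> (a = 0 \<and> b = 2) \<or> (a = 1 \<and> b = 2)" using that(3,4) by auto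
    thus ?thesis using that(1,2) W0 W1 W2 o12 o23 o13 by blast
  qed
  have d2: "0 \<le> e2 * (x i a * x i' b - x i b * x i' a)"
    if ii: "i < i'" "i' < 3" and ab: "a < b" "b < 3" for i i' a b
  proof -
    define Kc where "Kc = (\<lambda>k r. K (if r = (0::nat) then yy i else yy i') k)"
    have pos: "0 < (if r = (0::nat) then yy i else yy i')" for r using yyi by simp
    have "0 \<le> e2 * D2 (\<lambda>r. \<Sum>k. Kc k r * W a k) (\<lambda>r. \<Sum>k. Kc k r * W b k)"
    proof (rule sign2)
      fix k1 k2 assume "W a k1 \<noteq> 0" "W b k2 \<noteq> 0"
      hence "k1 < k2" using ordW ab by blast
      moreover have "yy i < yy i'" using ymono[OF ii] ii by (simp add: yyeq)
      ultimately have "0 \<le> e2 * (K (yy i) k1 * K (yy i') k2 - K (yy i) k2 * K (yy i') k1)"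
        using SR2 yyi by blast
      thus "0 \<le> e2 * D2 (Kc k1) (Kc k2)" unfolding D2_def Kc_def by (simp add: algebra_simps)
    qed (unfold Kc_def, (rule summ pos Wnn)+)
    thus ?thesis unfolding D2_def Kc_def x_def by (simp add: algebra_simps)
  qed
  have "\<not> (0 < e2*e3*(- x 0 0 + x 0 1 - x 0 2) \<and> e2*e3*(- x 1 0 + x 1 1 - x 1 2) < 0
           \<and> 0 < e2*e3*(- x 2 0 + x 2 1 - x 2 2))"
    by (rule alg9[OF e2 e3 nn d3 d2])
  thus ?thesis using Gx[of 0] Gx[of 1] Gx[of 2] by simp
qed

lemma cont_series:
  fixes K :: "real \<Rightarrow> nat \<Rightarrow> real" and f :: "nat \<Rightarrow> real"
  assumes Kc: "\<And>\<mu> k. 0 < \<mu> \<Longrightarrow> isCont (\<lambda>\<mu>. K \<mu> k) \<mu>"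
    and Knn: "\<And>\<mu> k. 0 < \<mu> \<Longrightarrow> 0 \<le> K \<mu> k"
    and Kb: "\<And>u \<mu> v k. 0 < u \<Longrightarrow> u \<le> \<mu> \<Longrightarrow> \<mu> \<le> v \<Longrightarrow> K \<mu> k \<le> K u k + K v k"
    and fnn: "\<And>k. 0 \<le> f k"
    and sf: "\<And>\<mu>. 0 < \<mu> \<Longrightarrow> summable (\<lambda>k. K \<mu> k * f k)"
    and \<mu>0: "0 < \<mu>0"
  shows "isCont (\<lambda>\<mu>. \<Sum>k. K \<mu> k * f k) \<mu>0"
proof -
  define u where "u = \<mu>0 / 2"
  define v where "v = 2 * \<mu>0"
  define T where "T = {u<..<v}"
  have u: "0 < u" "u < \<mu>0" unfolding u_def using \<mu>0 by auto
  have v: "\<mu>0 < v" unfolding v_def using \<mu>0 by auto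
  have ul: "uniform_limit T (\<lambda>n \<mu>. \<Sum>i<n. K \<mu> i * f i) (\<lambda>\<mu>. \<Sum>i. K \<mu> i * f i) sequentially"
  proof (rule Weierstrass_m_test)
    fix n \<mu> assume "\<mu> \<in> T"
    hence m: "u < \<mu>" "\<mu> < v" unfolding T_def by auto
    have "norm (K \<mu> n * f n) = K \<mu> n * f n" using Knn[of \<mu> n] fnn[of n] m u by simp
    also have "\<dots> \<le> (K u n + K v n) * f n"
      using Kb[of u \<mu> v n] m u fnn[of n] by (intro mult_right_mono) auto
    finally show "norm (K \<mu> n * f n) \<le> (K u n + K v n) * f n" .
  next
    show "summable (\<lambda>n. (K u n + K v n) * f n)"
      using sf[of u] sf[of v] u v \<mu>0 by (simp add: distrib_right summable_add)
  qed
  have "continuous_on T (\<lambda>\<mu>. \<Sum>i. K \<mu> i * f i)"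
  proof (rule uniform_limit_theorem[OF _ ul])
    show "\<forall>\<^sub>F n in sequentially. continuous_on T (\<lambda>\<mu>. \<Sum>i<n. K \<mu> i * f i)"
    proof (rule always_eventually, intro allI continuous_on_sum continuous_on_mult continuous_on_const)
      fix n i
      show "continuous_on T (\<lambda>\<mu>. K \<mu> i)"
        by (rule continuous_at_imp_continuous_on) (use Kc u in \<open>auto simp: T_def\<close>)
    qed
  qed simp
  moreover have "open T" "\<mu>0 \<in> T" unfolding T_def using u v by auto
  ultimately show ?thesis using continuous_on_eq_continuous_at by blast
qed

lemma unimodal_cong: "(\<And>\<mu>. \<mu> \<in> S \<Longrightarrow> f \<mu> = g \<mu>) \<Longrightarrow> unimodal_on S f = unimodal_on S g"
  unfolding unimodal_on_def monotone_on_def by auto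

theorem theorem5:
  fixes c d a1 a2 b1 b2 :: "real list" and x :: real
  assumes K_defined: "\<forall>\<mu>>0. \<forall>k. poch_vec (shift_vec d \<mu>) k \<noteq> 0"
    and SR3: "sign_regular3 {0<..} (UNIV :: nat set)
               (\<lambda>\<mu> k. poch_vec (shift_vec c \<mu>) k / poch_vec (shift_vec d \<mu>) k)"
    and pos: "\<forall>v\<in>set a1. v > 0" "\<forall>v\<in>set a2. v > 0" "\<forall>v\<in>set b1. v > 0" "\<forall>v\<in>set b2. v > 0"
    and x_pos: "x > 0"
    and conv_num: "\<forall>\<mu>>0. summable (hyp_term (shift_vec c \<mu> @ a1) (shift_vec d \<mu> @ b1) x)"
    and conv_den: "\<forall>\<mu>>0. summable (hyp_term (shift_vec c \<mu> @ b2) (shift_vec d \<mu> @ a2) x)"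
    and den_nz: "\<forall>\<mu>>0. hypF (shift_vec c \<mu> @ b2) (shift_vec d \<mu> @ a2) x \<noteq> 0"
    and mn: "length (a1 @ a2) \<le> length (b1 @ b2)"
    and chain: "\<forall>k < length (a1 @ a2).
        esym (length (b1 @ b2) - k) (b1 @ b2) / esym (length (a1 @ a2) - k) (a1 @ a2)
        \<le> esym (length (b1 @ b2) - k - 1) (b1 @ b2) / esym (length (a1 @ a2) - k - 1) (a1 @ a2)"
  shows "unimodal_on {0<..} (\<lambda>\<mu>. hypF (shift_vec c \<mu> @ a1) (shift_vec d \<mu> @ b1) x
                                 / hypF (shift_vec c \<mu> @ b2) (shift_vec d \<mu> @ a2) x)"
proof -
  define K where "K = (\<lambda>\<mu> k. poch_vec (shift_vec c \<mu>) k / poch_vec (shift_vec d \<mu>) k)"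
  define \<alpha> where "\<alpha> = (\<lambda>k. poch_vec a1 k / poch_vec b1 k * x ^ k / fact k)"
  define \<beta> where "\<beta> = (\<lambda>k. poch_vec b2 k / poch_vec a2 k * x ^ k / fact k)"
  have pa1: "0 < poch_vec a1 k" and pa2: "0 < poch_vec a2 k" and pb1: "0 < poch_vec b1 k"
    and pb2: "0 < poch_vec b2 k" for k using poch_vec_pos pos by auto
  have apos: "0 < \<alpha> k" for k unfolding \<alpha>_def using pa1 pb1 x_pos by simp
  have bpos: "0 < \<beta> k" for k unfolding \<beta>_def using pa2 pb2 x_pos by simp
  have ht_num: "hyp_term (shift_vec c \<mu> @ a1) (shift_vec d \<mu> @ b1) x k = K \<mu> k * \<alpha> k" if "0 < \<mu>" for \<mu> k
    unfolding hyp_term_def poch_vec_append K_def \<alpha>_def using K_defined that pb1[of k]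
    by (simp add: field_simps)
  have ht_den: "hyp_term (shift_vec c \<mu> @ b2) (shift_vec d \<mu> @ a2) x k = K \<mu> k * \<beta> k" if "0 < \<mu>" for \<mu> k
    unfolding hyp_term_def poch_vec_append K_def \<beta>_def using K_defined that pa2[of k]
    by (simp add: field_simps)
  have suma: "summable (\<lambda>k. K \<mu> k * \<alpha> k)" if "0 < \<mu>" for \<mu>
  proof -
    have "hyp_term (shift_vec c \<mu> @ a1) (shift_vec d \<mu> @ b1) x = (\<lambda>k. K \<mu> k * \<alpha> k)"
      using ht_num[OF that] by (intro ext) simp
    thus ?thesis using conv_num that by metis
  qed
  have sumb: "summable (\<lambda>k. K \<mu> k * \<beta> k)" if "0 < \<mu>" for \<mu>
  proof -
    have "hyp_term (shift_vec c \<mu> @ b2) (shift_vec d \<mu> @ a2) x = (\<lambda>k. K \<mu> k * \<beta> k)"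
      using ht_den[OF that] by (intro ext) simp
    thus ?thesis using conv_den that by metis
  qed
  define N where "N = (\<lambda>\<mu>. \<Sum>k. K \<mu> k * \<alpha> k)"
  define Dn where "Dn = (\<lambda>\<mu>. \<Sum>k. K \<mu> k * \<beta> k)"
  have Feq: "hypF (shift_vec c \<mu> @ a1) (shift_vec d \<mu> @ b1) x / hypF (shift_vec c \<mu> @ b2) (shift_vec d \<mu> @ a2) x
      = N \<mu> / Dn \<mu>" if "0 < \<mu>" for \<mu>
  proof -
    have "hyp_term (shift_vec c \<mu> @ a1) (shift_vec d \<mu> @ b1) x = (\<lambda>k. K \<mu> k * \<alpha> k)"
      using ht_num[OF that] by (intro ext) simp
    moreover have "hyp_term (shift_vec c \<mu> @ b2) (shift_vec d \<mu> @ a2) x = (\<lambda>k. K \<mu> k * \<beta> k)"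
      using ht_den[OF that] by (intro ext) simp
    ultimately show ?thesis unfolding hypF_def N_def Dn_def by simp
  qed
  have K0: "K \<mu> 0 = 1" if "0 < \<mu>" for \<mu> unfolding K_def by simp
  obtain \<epsilon> :: "nat \<Rightarrow> real" where \<epsilon>: "\<forall>m\<in>{1,2,3}. (\<epsilon> m = 1 \<or> \<epsilon> m = -1) \<and>
       (\<forall>xs ys. (\<forall>i<m. xs i \<in> {0<..} \<and> ys i \<in> (UNIV :: nat set)) \<longrightarrow>
          (\<forall>i j. i < j \<longrightarrow> j < m \<longrightarrow> xs i < xs j \<and> ys i < ys j) \<longrightarrow>
          \<epsilon> m * Determinant.det (Matrix.mat m m (\<lambda>(i,j). K (xs i) (ys j))) \<ge> 0)"
    using SR3 unfolding sign_regular3_def K_def by blast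
  have e1: "\<epsilon> 1 = 1 \<or> \<epsilon> 1 = -1" and e2: "\<epsilon> 2 = 1 \<or> \<epsilon> 2 = -1" and e3: "\<epsilon> 3 = 1 \<or> \<epsilon> 3 = -1"
    using \<epsilon> by auto
  have epsR: "\<And>m xs ys. m \<in> {1,2,3} \<Longrightarrow> (\<forall>i<m. xs i \<in> {0<..} \<and> ys i \<in> (UNIV :: nat set)) \<Longrightarrow>
          (\<forall>i j. i < j \<longrightarrow> j < m \<longrightarrow> xs i < xs j \<and> ys i < ys j) \<Longrightarrow>
          0 \<le> \<epsilon> m * Determinant.det (Matrix.mat m m (\<lambda>(i,j). K (xs i) (ys j)))"
    using \<epsilon> by blast
  have S1: "0 \<le> \<epsilon> 1 * K \<mu> k" if "0 < \<mu>" for \<mu> k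
    using epsR[of 1 "\<lambda>_. \<mu>" "\<lambda>_. k"] that by (simp add: det1')
  have eps1: "\<epsilon> 1 = 1" using S1[of 1 0] K0[of 1] e1 by auto
  have Knn: "0 \<le> K \<mu> k" if "0 < \<mu>" for \<mu> k using S1[OF that, of k] eps1 by simp
  have SR2: "0 \<le> \<epsilon> 2 * (K \<mu> k * K \<mu>' k' - K \<mu> k' * K \<mu>' k)"
    if "0 < \<mu>" "\<mu> < \<mu>'" "k < k'" for \<mu> \<mu>' k k'
  proof -
    have "0 \<le> \<epsilon> 2 * Determinant.det (Matrix.mat 2 2 (\<lambda>(i,j). K ((\<lambda>i. if i = 0 then \<mu> else \<mu>') i) ((\<lambda>i. if i = 0 then k else k') j)))"
    proof (rule epsR; (intro allI impI)?)
      fix i assume "i < (2::nat)" thus "(if i = 0 then \<mu> else \<mu>') \<in> {0<..} \<and> (if i = 0 then k else k') \<in> UNIV"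
        using that by auto
    next
      fix i j :: nat assume "i < j" "j < 2"
      thus "(if i = 0 then \<mu> else \<mu>') < (if j = 0 then \<mu> else \<mu>') \<and> (if i = 0 then k else k') < (if j = 0 then k else k')"
        using that by auto
    qed simp
    thus ?thesis by (simp add: det2 algebra_simps)
  qed
  have SR3': "0 \<le> \<epsilon> 3 * D3 (\<lambda>i. K (y i) k0) (\<lambda>i. K (y i) k1) (\<lambda>i. K (y i) k2)"
    if "0 < y 0" "y 0 < y 1" "y 1 < y 2" "k0 < k1" "k1 < k2" for y k0 k1 k2
  proof -
    define ys where "ys = (\<lambda>i::nat. if i = 0 then k0 else if i = 1 then k1 else k2)"
    have "0 \<le> \<epsilon> 3 * Determinant.det (Matrix.mat 3 3 (\<lambda>(i,j). K (y i) (ys j)))"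
    proof (rule epsR; (intro allI impI)?)
      fix i assume "i < (3::nat)" thus "y i \<in> {0<..} \<and> ys i \<in> UNIV"
        using that by (auto simp: numeral_3_eq_3 numeral_2_eq_2 less_Suc_eq)
    next
      fix i j :: nat assume "i < j" "j < 3"
      thus "y i < y j \<and> ys i < ys j"
        using that unfolding ys_def by (auto simp: numeral_3_eq_3 numeral_2_eq_2 less_Suc_eq)
    qed simp
    thus ?thesis by (simp add: det3 D3_def ys_def algebra_simps)
  qed
  have Kmono: "0 \<le> \<epsilon> 2 * (K \<mu>' k - K \<mu> k)" if "0 < \<mu>" "\<mu> \<le> \<mu>'" for \<mu> \<mu>' k
  proof (cases "k = 0 \<or> \<mu> = \<mu>'")
    case True thus ?thesis using K0 that by auto
  next
    case False
    thus ?thesis using SR2[of \<mu> \<mu>' 0 k] that K0[of \<mu>] K0[of \<mu>'] by simp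
  qed
  have Kb: "K \<mu> k \<le> K u k + K v k" if "0 < u" "u \<le> \<mu>" "\<mu> \<le> v" for u \<mu> v k
  proof -
    have "K \<mu> k \<le> K v k \<or> K \<mu> k \<le> K u k"
      using Kmono[of u \<mu> k] Kmono[of \<mu> v k] that e2 by auto
    thus ?thesis using Knn[of u k] Knn[of v k] that by auto
  qed
  have Kc: "isCont (\<lambda>\<mu>. K \<mu> k) \<mu>" if "0 < \<mu>" for \<mu> k
    unfolding K_def using K_defined that by (intro isCont_divide isCont_poch_vec) auto
  have Ncont: "isCont N \<mu>" if "0 < \<mu>" for \<mu>
    unfolding N_def by (rule cont_series[OF Kc Knn Kb _ suma that]) (use apos in \<open>auto simp: less_imp_le\<close>)
  have Dcont: "isCont Dn \<mu>" if "0 < \<mu>" for \<mu>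
    unfolding Dn_def by (rule cont_series[OF Kc Knn Kb _ sumb that]) (use bpos in \<open>auto simp: less_imp_le\<close>)
  have Dpos: "0 < Dn \<mu>" if "0 < \<mu>" for \<mu>
  proof -
    have "(\<Sum>k<1. K \<mu> k * \<beta> k) \<le> Dn \<mu>" unfolding Dn_def
      by (rule sum_le_suminf[OF sumb[OF that]]) (use Knn[OF that] bpos in \<open>auto intro: mult_nonneg_nonneg less_imp_le\<close>)
    thus ?thesis using K0[OF that] bpos[of 0] by simp
  qed
  define F where "F = (\<lambda>\<mu>. N \<mu> / Dn \<mu>)"
  have Fcont: "isCont F \<mu>" if "0 < \<mu>" for \<mu>
    unfolding F_def using Ncont[OF that] Dcont[OF that] Dpos[OF that] by (intro isCont_divide) auto
  have qcr: "min (\<alpha> i / \<beta> i) (\<alpha> l / \<beta> l) \<le> \<alpha> j / \<beta> j" if "i < j" "j < l" for i j l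
  proof (rule r_qc[of "a1 @ a2" "b1 @ b2"])
    show "\<forall>v\<in>set (a1 @ a2). v > 0" "\<forall>v\<in>set (b1 @ b2). v > 0" using pos by auto
    show "\<And>k. \<alpha> k / \<beta> k = poch_vec (a1 @ a2) k / poch_vec (b1 @ b2) k"
      unfolding \<alpha>_def \<beta>_def poch_vec_append using pa1 pa2 pb1 pb2 x_pos by (simp add: field_simps)
  qed (use mn chain that in auto)
  define s where "s = \<epsilon> 2 * \<epsilon> 3"
  have GF: "N \<mu> - lam * Dn \<mu> = Dn \<mu> * (F \<mu> - lam)" if "0 < \<mu>" for \<mu> lam
    unfolding F_def using Dpos[OF that] by (simp add: field_simps)
  have vd: "\<not> (0 < s * (Dn (y 0) * (F (y 0) - lam)) \<and> s * (Dn (y 1) * (F (y 1) - lam)) < 0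
             \<and> 0 < s * (Dn (y 2) * (F (y 2) - lam)))"
    if y: "0 < y 0" "y 0 < y 1" "y 1 < y 2" for y :: "nat \<Rightarrow> real" and lam :: real
  proof -
    have "\<not> (0 < s * (N (y 0) - lam * Dn (y 0)) \<and> s * (N (y 1) - lam * Dn (y 1)) < 0
             \<and> 0 < s * (N (y 2) - lam * Dn (y 2)))"
      unfolding s_def N_def Dn_def
      by (rule vd_core[OF Knn apos bpos suma sumb e2 e3 SR2 SR3' qcr y]) auto
    moreover have "0 < y 1" "0 < y 2" using y by auto
    ultimately show ?thesis using GF y(1) by metis
  qed
  have pD: "0 < a \<Longrightarrow> 0 < Dn a" for a using Dpos by auto
  have "unimodal_on {0<..} F"
  proof (cases "s = 1")
    case True
    show ?thesis
    proof (rule qc_unimodal[OF Fcont])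
      fix a b c :: real assume abc: "0 < a" "a < b" "b < c"
      show "min (F a) (F c) \<le> F b"
      proof (rule ccontr)
        assume "\<not> min (F a) (F c) \<le> F b"
        define lam where "lam = (F b + min (F a) (F c)) / 2"
        define y where "y = (\<lambda>i::nat. if i = 0 then a else if i = 1 then b else c)"
        have "F a > lam" "F b < lam" "F c > lam" unfolding lam_def using \<open>\<not> min (F a) (F c) \<le> F b\<close> by auto
        hence "0 < s * (Dn (y 0) * (F (y 0) - lam)) \<and> s * (Dn (y 1) * (F (y 1) - lam)) < 0
             \<and> 0 < s * (Dn (y 2) * (F (y 2) - lam))"
          using True pD[of a] pD[of b] pD[of c] abc unfolding y_def by (auto simp: mult_pos_neg)
        thus False using vd[of y lam] abc unfolding y_def by auto
      qed
    qed auto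
  next
    case False
    hence sm: "s = -1" unfolding s_def using e2 e3 by auto
    have "unimodal_on {0<..} (\<lambda>\<mu>. - F \<mu>)"
    proof (rule qc_unimodal)
      show "\<And>\<mu>. 0 < \<mu> \<Longrightarrow> isCont (\<lambda>\<mu>. - F \<mu>) \<mu>" using Fcont by (intro continuous_intros) auto
      fix a b c :: real assume abc: "0 < a" "a < b" "b < c"
      show "min (- F a) (- F c) \<le> - F b"
      proof (rule ccontr)
        assume "\<not> min (- F a) (- F c) \<le> - F b"
        define lam where "lam = (F b + max (F a) (F c)) / 2"
        define y where "y = (\<lambda>i::nat. if i = 0 then a else if i = 1 then b else c)"
        have "F a < lam" "F b > lam" "F c < lam" unfolding lam_def using \<open>\<not> min (- F a) (- F c) \<le> - F b\<close> by auto
        hence "0 < s * (Dn (y 0) * (F (y 0) - lam)) \<and> s * (Dn (y 1) * (F (y 1) - lam)) < 0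
             \<and> 0 < s * (Dn (y 2) * (F (y 2) - lam))"
          using sm pD[of a] pD[of b] pD[of c] abc unfolding y_def by (auto simp: mult_pos_neg mult_neg_pos)
        thus False using vd[of y lam] abc unfolding y_def by auto
      qed
    qed
    thus ?thesis by (rule unimodal_neg)
  qed
  thus ?thesis using Feq unfolding F_def by (subst unimodal_cong) auto
qed


end
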